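(* Let $L$ be a normal incline and let $A\in M_n(L)$ be a symmetric matrix. Then the following are equivalent: (1) $A$ is positive semidefinite; (2) $A$ is completely positive; (3) every $2\times 2$ principal submatrix of $A$ has positive determinant greater than or equal to its negative determinant, i.e. $a_{ii}\otimes a_{jj}\ge a_{ij}\otimes a_{ji}$ for all $i,j$; (4) there exist a diagonal matrix $D\in M_n(L)$ and a symmetric matrix $M\in M_n(L)$ all of whose diagonal entries equal $\mathbf{1}$ such that $A=DMD$.
   Context: An incline is a nonempty set $L$ with binary operations $\oplus,\otimes$ such that $(L,\oplus)$ is a semilattice ($\oplus$ associative, commutative, idempotent), $(L,\otimes)$ is a semigroup, $x\otimes(y\oplus z)=(x\otimes y)\oplus(x\otimes z)$ and $x\oplus(x\otimes y)=x$ for all $x,y,z$. The order is $x\le y\iff x\oplus y=y$. $L$ is commutative if $\otimes$ is commutative. An r-ideal is a nonempty $J\subseteq L$ closed under $\oplus$ and under multiplication by arbitrary elements of $L$; a lattice ideal is a nonempty $J\subseteq L$ closed under $\oplus$ and downward closed for $\le$. A commutative incline $L$ is normal if it has an additive identity $\mathbf{0}$ and a multiplicative identity $\mathbf{1}$ and: (LI-property) every singly generated r-ideal of $L$ is a lattice ideal; (unique square root property) for every $x\in L$ there is a unique $c\in L$ with $c\otimes c=x$; (AG-property) $x\otimes y\le (x\otimes x)\oplus(y\otimes y)$ for all $x,y$. Matrices over $L$ are multiplied by $(BC)_{ij}=\bigoplus_k b_{ik}\otimes c_{kj}$ and added entrywise by $\oplus$; $B^T$ is the transpose. A matrix $A\in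 M_n(L)$ is positive semidefinite if $A=BB^T$ for some $n\times k$ matrix $B$ over $L$, and completely positive if moreover $B$ can be chosen with every entry a perfect square (of the form $c\otimes c$). For a $2\times 2$ matrix $\begin{bmatrix}p&q\\ r&s\end{bmatrix}$ the positive determinant is $p\otimes s$ and the negative determinant is $q\otimes r$. A diagonal matrix has all off-diagonal entries $\mathbf{0}$. *)

theory Defs
  imports Main
begin

locale incline =
  fixes add :: "'a \<Rightarrow> 'a \<Rightarrow> 'a" and mul :: "'a \<Rightarrow> 'a \<Rightarrow> 'a"
  assumes add_assoc: "add (add x y) z = add x (add y z)"
    and add_comm: "add x y = add y x"
    and add_idem: "add x x = x"
    and mul_assoc: "mul (mul x y) z = mul x (mul y z)"
    and distrib: "mul x (add y z) = add (mul x y) (mul x z)"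
    and absorb: "add x (mul x y) = x"

definition inc_le :: "('a \<Rightarrow> 'a \<Rightarrow> 'a) \<Rightarrow> 'a \<Rightarrow> 'a \<Rightarrow> bool" where
  "inc_le add x y \<longleftrightarrow> add x y = y"

definition r_ideal :: "('a \<Rightarrow> 'a \<Rightarrow> 'a) \<Rightarrow> ('a \<Rightarrow> 'a \<Rightarrow> 'a) \<Rightarrow> 'a set \<Rightarrow> bool" where
  "r_ideal add mul J \<longleftrightarrow> J \<noteq> {} \<and> (\<forall>x\<in>J. \<forall>y\<in>J. add x y \<in> J)
     \<and> (\<forall>x\<in>J. \<forall>y. mul y x \<in> J \<and> mul x y \<in> J)"

definition lattice_ideal :: "('a \<Rightarrow> 'a \<Rightarrow> 'a) \<Rightarrow> 'a set \<Rightarrow> bool" where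
  "lattice_ideal add J \<longleftrightarrow> J \<noteq> {} \<and> (\<forall>x\<in>J. \<forall>y\<in>J. add x y \<in> J)
     \<and> (\<forall>x\<in>J. \<forall>y. inc_le add y x \<longrightarrow> y \<in> J)"

definition gen_r_ideal :: "('a \<Rightarrow> 'a \<Rightarrow> 'a) \<Rightarrow> ('a \<Rightarrow> 'a \<Rightarrow> 'a) \<Rightarrow> 'a \<Rightarrow> 'a set" where
  "gen_r_ideal add mul a = \<Inter>{J. r_ideal add mul J \<and> a \<in> J}"

locale normal_incline = incline add mul
  for add :: "'a \<Rightarrow> 'a \<Rightarrow> 'a" and mul :: "'a \<Rightarrow> 'a \<Rightarrow> 'a" +
  fixes zero :: 'a and one :: 'a
  assumes mul_comm: "mul x y = mul y x"
    and add_zero: "add x zero = x"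
    and mul_one: "mul one x = x" and one_mul: "mul x one = x"
    and LI_property: "lattice_ideal add (gen_r_ideal add mul a)"
    and unique_sqrt: "\<exists>!c. mul c c = x"
    and AG_property: "inc_le add (mul x y) (add (mul x x) (mul y y))"

definition isum :: "('a \<Rightarrow> 'a \<Rightarrow> 'a) \<Rightarrow> 'a \<Rightarrow> nat \<Rightarrow> (nat \<Rightarrow> 'a) \<Rightarrow> 'a" where
  "isum add zero k f = foldr (\<lambda>i acc. add (f i) acc) [0..<k] zero"

text \<open>Matrices are functions nat => nat => 'a; only entries with indices below the
  stated dimensions are relevant. mat_mult with inner dimension k.\<close>
definition mat_mult :: "('a \<Rightarrow> 'a \<Rightarrow> 'a) \<Rightarrow> ('a \<Rightarrow> 'a \<Rightarrow> 'a) \<Rightarrow> 'a \<Rightarrow> nat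
    \<Rightarrow> (nat \<Rightarrow> nat \<Rightarrow> 'a) \<Rightarrow> (nat \<Rightarrow> nat \<Rightarrow> 'a) \<Rightarrow> nat \<Rightarrow> nat \<Rightarrow> 'a" where
  "mat_mult add mul zero k B C = (\<lambda>i j. isum add zero k (\<lambda>l. mul (B i l) (C l j)))"

definition mtrans :: "(nat \<Rightarrow> nat \<Rightarrow> 'a) \<Rightarrow> nat \<Rightarrow> nat \<Rightarrow> 'a" where
  "mtrans B = (\<lambda>i j. B j i)"

definition mat_eq :: "nat \<Rightarrow> (nat \<Rightarrow> nat \<Rightarrow> 'a) \<Rightarrow> (nat \<Rightarrow> nat \<Rightarrow> 'a) \<Rightarrow> bool" where
  "mat_eq n A B \<longleftrightarrow> (\<forall>i<n. \<forall>j<n. A i j = B i j)"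

definition symmetric_mat :: "nat \<Rightarrow> (nat \<Rightarrow> nat \<Rightarrow> 'a) \<Rightarrow> bool" where
  "symmetric_mat n A \<longleftrightarrow> (\<forall>i<n. \<forall>j<n. A i j = A j i)"

definition diagonal_mat :: "'a \<Rightarrow> nat \<Rightarrow> (nat \<Rightarrow> nat \<Rightarrow> 'a) \<Rightarrow> bool" where
  "diagonal_mat zero n D \<longleftrightarrow> (\<forall>i<n. \<forall>j<n. i \<noteq> j \<longrightarrow> D i j = zero)"

definition psd :: "('a \<Rightarrow> 'a \<Rightarrow> 'a) \<Rightarrow> ('a \<Rightarrow> 'a \<Rightarrow> 'a) \<Rightarrow> 'a \<Rightarrow> nat \<Rightarrow> (nat \<Rightarrow> nat \<Rightarrow> 'a) \<Rightarrow> bool" where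
  "psd add mul zero n A \<longleftrightarrow> (\<exists>k B. mat_eq n A (mat_mult add mul zero k B (mtrans B)))"

definition completely_positive :: "('a \<Rightarrow> 'a \<Rightarrow> 'a) \<Rightarrow> ('a \<Rightarrow> 'a \<Rightarrow> 'a) \<Rightarrow> 'a \<Rightarrow> nat \<Rightarrow> (nat \<Rightarrow> nat \<Rightarrow> 'a) \<Rightarrow> bool" where
  "completely_positive add mul zero n A \<longleftrightarrow> (\<exists>k B. mat_eq n A (mat_mult add mul zero k B (mtrans B))
      \<and> (\<forall>i<n. \<forall>l<k. \<exists>c. B i l = mul c c))"

end

theory Submission
  imports Defs
begin


context normal_incline begin

abbreviation le where "le x y \<equiv> inc_le add x y"

lemma mul_lc: "mul x (mul y z) = mul y (mul x z)"
  by (metis mul_assoc mul_comm)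

lemma le_refl: "le x x" by (simp add: inc_le_def add_idem)
lemma le_trans: "le x y \<Longrightarrow> le y z \<Longrightarrow> le x z"
  unfolding inc_le_def by (metis add_assoc)
lemma le_antisym: "le x y \<Longrightarrow> le y x \<Longrightarrow> x = y"
  unfolding inc_le_def by (metis add_comm)
lemma add_le: "le x z \<Longrightarrow> le y z \<Longrightarrow> le (add x y) z"
  unfolding inc_le_def by (metis add_assoc)
lemma le_add1: "le x (add x y)"
  unfolding inc_le_def by (metis add_assoc add_idem)
lemma le_add2: "le y (add x y)"
  unfolding inc_le_def by (metis add_assoc add_idem add_comm)
lemma zero_le: "le zero x"
  unfolding inc_le_def by (metis add_zero add_comm)
lemma mul_le: "le (mul x y) x"
  unfolding inc_le_def by (metis absorb add_comm)
lemma mul_le2: "le (mul x y) y"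
  using mul_le mul_comm by metis
lemma mul_mono: "le x y \<Longrightarrow> le (mul z x) (mul z y)"
  unfolding inc_le_def by (metis distrib)
lemma mul_mono2: "le x y \<Longrightarrow> le u v \<Longrightarrow> le (mul x u) (mul y v)"
  by (metis le_trans mul_mono mul_comm)
lemma mul_zero: "mul zero x = zero"
  by (meson le_antisym mul_le zero_le)
lemma add_lc: "add x (add y z) = add y (add x z)"
  by (metis add_assoc add_comm)
lemma add_lidem: "add x (add x y) = add x y"
  by (simp add: add_assoc[symmetric] add_idem)
lemma sq_add: "mul (add x y) (add x y) = add (mul x x) (mul y y)"
proof -
  have e1: "mul (add x y) x = add (mul x x) (mul x y)"
    using distrib[of x x y] mul_comm[of x "add x y"] by simp
  have e2: "mul (add x y) y = add (mul x y) (mul y y)"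
    using distrib[of y x y] mul_comm[of y "add x y"] mul_comm[of y x] by simp
  have "mul (add x y) (add x y) = add (add (mul x x) (mul x y)) (add (mul x y) (mul y y))"
    using distrib[of "add x y" x y] e1 e2 by simp
  also have "\<dots> = add (add (mul x x) (mul y y)) (mul x y)"
    by (simp add: add_assoc add_comm add_lc add_lidem)
  also have "\<dots> = add (mul x x) (mul y y)"
    using AG_property[of x y] unfolding inc_le_def by (metis add_comm)
  finally show ?thesis .
qed
lemma sq_reflect: "le (mul x x) (mul y y) \<Longrightarrow> le x y"
proof -
  assume "le (mul x x) (mul y y)"
  hence "mul (add x y) (add x y) = mul y y" unfolding inc_le_def sq_add .
  thus ?thesis unfolding inc_le_def using unique_sqrt[of "mul y y"] by blast
qed

definition sqrt where "sqrt x = (THE c. mul c c = x)"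
lemma sqrt_sq: "mul (sqrt x) (sqrt x) = x"
  unfolding sqrt_def using theI'[OF unique_sqrt] .

lemma LI_div: assumes "le y a" shows "\<exists>c. y = mul a c"
proof -
  let ?S = "{mul a c |c. True}"
  have c1: "add (mul a c) (mul a d) \<in> ?S" for c d unfolding distrib[symmetric] by blast
  have c2: "mul y (mul a c) \<in> ?S" for y c unfolding mul_lc[of y a c] by blast
  have c3: "mul (mul a c) y \<in> ?S" for y c unfolding mul_assoc by blast
  have r: "r_ideal add mul ?S"
    unfolding r_ideal_def using c1 c2 c3 by blast
  have "a \<in> ?S" using one_mul[of a, symmetric] by auto
  hence "gen_r_ideal add mul a \<subseteq> ?S" using r unfolding gen_r_ideal_def by blast
  moreover have "a \<in> gen_r_ideal add mul a" unfolding gen_r_ideal_def by blast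
  hence "y \<in> gen_r_ideal add mul a" using LI_property[of a] assms unfolding lattice_ideal_def by blast
  ultimately show ?thesis by blast
qed

lemma foldr_gen: "foldr (\<lambda>i acc. add (f i) acc) xs z = add (foldr (\<lambda>i acc. add (f i) acc) xs zero) z"
  by (induct xs) (simp_all add: add_assoc add_zero add_comm[of zero])

lemma isum_0: "isum add zero 0 f = zero" by (simp add: isum_def)
lemma isum_Suc: "isum add zero (Suc k) f = add (isum add zero k f) (f k)"
  unfolding isum_def by (simp, subst foldr_gen, simp add: add_zero)

lemma isum_le: "(\<And>l. l < k \<Longrightarrow> le (f l) a) \<Longrightarrow> le (isum add zero k f) a"
  by (induct k) (auto simp: isum_0 isum_Suc zero_le intro: add_le)
lemma le_isum: "l < k \<Longrightarrow> le (f l) (isum add zero k f)"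
  by (induct k) (auto simp: isum_Suc le_add2 less_Suc_eq intro: le_trans le_add1)
lemma isum_eq: "(\<And>l. l < k \<Longrightarrow> le (f l) a) \<Longrightarrow> l < k \<Longrightarrow> f l = a \<Longrightarrow> isum add zero k f = a"
  by (metis isum_le le_isum le_antisym)
lemma isum_sq: "mul (isum add zero k f) (isum add zero k f) = isum add zero k (\<lambda>l. mul (f l) (f l))"
  by (induct k) (simp_all add: isum_0 isum_Suc mul_zero sq_add)

end


context normal_incline begin

lemma dm: assumes "diagonal_mat zero n D" "i < n" "p < n"
  shows "mat_mult add mul zero n D M i p = mul (D i i) (M i p)"
  unfolding mat_mult_def
  apply (rule isum_eq[where l=i])
  subgoal for l using assms by (cases "l = i") (auto simp: diagonal_mat_def mul_zero zero_le le_refl)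
  using assms by auto

lemma dmd: assumes "diagonal_mat zero n D" "i < n" "j < n"
  shows "mat_mult add mul zero n (mat_mult add mul zero n D M) D i j = mul (mul (D i i) (M i j)) (D j j)"
  unfolding mat_mult_def[of add mul zero n "mat_mult add mul zero n D M"]
  apply (rule isum_eq[where l=j])
  subgoal for l using assms dm[OF assms(1,2)] by (cases "l = j") (auto simp: diagonal_mat_def mul_zero mul_comm[of _ zero] zero_le le_refl)
  using assms dm[OF assms(1,2)] by auto

lemma psd_3: assumes "psd add mul zero n A" "symmetric_mat n A" "i < n" "j < n"
  shows "le (mul (A i j) (A j i)) (mul (A i i) (A j j))"
proof -
  obtain k B where B: "mat_eq n A (mat_mult add mul zero k B (mtrans B))"
    using assms(1) unfolding psd_def by blast
  have a: "A p q = isum add zero k (\<lambda>l. mul (B p l) (B q l))" if "p < n" "q < n" for p q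
    using B that unfolding mat_eq_def mat_mult_def mtrans_def by auto
  have "mul (A i j) (A j i) = mul (A i j) (A i j)" using assms unfolding symmetric_mat_def by auto
  also have "\<dots> = isum add zero k (\<lambda>l. mul (mul (B i l) (B i l)) (mul (B j l) (B j l)))"
    unfolding a[OF assms(3,4)] isum_sq by (simp add: mul_assoc mul_comm mul_lc)
  also have "le \<dots> (mul (A i i) (A j j))"
  proof (rule isum_le)
    fix l assume "l < k"
    then show "le (mul (mul (B i l) (B i l)) (mul (B j l) (B j l))) (mul (A i i) (A j j))"
      unfolding a[OF assms(3,3)] a[OF assms(4,4)]
      by (intro mul_mono2 le_isum[of l k "\<lambda>l. mul (B i l) (B i l)"] le_isum[of l k "\<lambda>l. mul (B j l) (B j l)"])
  qed
  finally show ?thesis .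
qed

lemma three_four: assumes "symmetric_mat n A"
  and h: "\<forall>i<n. \<forall>j<n. le (mul (A i j) (A j i)) (mul (A i i) (A j j))"
  shows "\<exists>D M. diagonal_mat zero n D \<and> symmetric_mat n M \<and> (\<forall>i<n. M i i = one)
            \<and> mat_eq n A (mat_mult add mul zero n (mat_mult add mul zero n D M) D)"
proof -
  define d where "d i = sqrt (A i i)" for i
  have ex: "\<exists>c. A i j = mul (mul (d i) (d j)) c" if "i < n" "j < n" for i j
  proof -
    have "mul (A i j) (A j i) = mul (A i j) (A i j)" using assms(1) that unfolding symmetric_mat_def by auto
    moreover have "mul (A i i) (A j j) = mul (mul (d i) (d j)) (mul (d i) (d j))"
    proof -
      have "mul (A i i) (A j j) = mul (mul (d i) (d i)) (mul (d j) (d j))"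
        unfolding d_def sqrt_sq ..
      thus ?thesis by (simp add: mul_assoc mul_comm mul_lc)
    qed
    ultimately have "le (A i j) (mul (d i) (d j))" using h that sq_reflect by metis
    thus ?thesis using LI_div by blast
  qed
  define cc where "cc i j = (SOME c. A i j = mul (mul (d i) (d j)) c)" for i j
  have cc: "A i j = mul (mul (d i) (d j)) (cc i j)" if "i < n" "j < n" for i j
    unfolding cc_def using someI_ex[OF ex[OF that]] .
  define M where "M i j = (if i = j then one else if i < j then cc i j else cc j i)" for i j
  define D where "D i j = (if i = j then d i else zero)" for i j
  have diag: "diagonal_mat zero n D" unfolding diagonal_mat_def D_def by auto
  have "mat_eq n A (mat_mult add mul zero n (mat_mult add mul zero n D M) D)"
    unfolding mat_eq_def
  proof (intro allI impI)
    fix i j assume ij: "i < n" "j < n"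
    have "A i j = mul (mul (d i) (M i j)) (d j)"
    proof (cases "i = j")
      case True thus ?thesis unfolding M_def d_def by (simp add: one_mul sqrt_sq)
    next
      case False
      show ?thesis
      proof (cases "i < j")
        case True thus ?thesis using cc[OF ij] False unfolding M_def
          by (simp add: mul_assoc mul_comm mul_lc)
      next
        case F2: False
        have "A i j = A j i" using assms(1) ij unfolding symmetric_mat_def by auto
        thus ?thesis using cc[OF ij(2,1)] False F2 unfolding M_def
          by (simp add: mul_assoc mul_comm mul_lc)
      qed
    qed
    thus "A i j = mat_mult add mul zero n (mat_mult add mul zero n D M) D i j"
      using dmd[OF diag ij] unfolding D_def by simp
  qed
  moreover have "symmetric_mat n M" unfolding symmetric_mat_def M_def by auto
  moreover have "\<forall>i<n. M i i = one" unfolding M_def by auto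
  ultimately show ?thesis using diag by blast
qed

lemma four_three: assumes "diagonal_mat zero n D" "\<forall>i<n. M i i = one"
  "mat_eq n A (mat_mult add mul zero n (mat_mult add mul zero n D M) D)" "symmetric_mat n M"
  "i < n" "j < n"
  shows "le (mul (A i j) (A j i)) (mul (A i i) (A j j))"
proof -
  have a: "A p q = mul (mul (D p p) (M p q)) (D q q)" if "p < n" "q < n" for p q
    using assms(3) dmd[OF assms(1) that] that unfolding mat_eq_def by auto
  have "mul (A i j) (A j i) = mul (mul (mul (D i i) (D i i)) (mul (D j j) (D j j))) (mul (M i j) (M i j))"
    unfolding a[OF assms(5,6)] a[OF assms(6,5)] using assms(4,5,6) unfolding symmetric_mat_def
    by (simp add: mul_assoc mul_comm mul_lc)
  also have "le \<dots> (mul (mul (D i i) (D i i)) (mul (D j j) (D j j)))" by (rule mul_le)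
  also have "mul (mul (D i i) (D i i)) (mul (D j j) (D j j)) = mul (A i i) (A j j)"
    unfolding a[OF assms(5,5)] a[OF assms(6,6)] using assms(2,5,6) by (simp add: one_mul)
  finally show ?thesis .
qed

end


context normal_incline begin

lemma four_psd: assumes diag: "diagonal_mat zero n D" and sym: "symmetric_mat n M"
  and one: "\<forall>i<n. M i i = one"
  and eq: "mat_eq n A (mat_mult add mul zero n (mat_mult add mul zero n D M) D)"
  shows "psd add mul zero n A"
proof -
  define s where "s p q = sqrt (M p q)" for p q
  define B where "B i l = (if i = l div n \<or> i = l mod n then mul (D i i) (s (l div n) (l mod n)) else zero)" for i l
  have ss: "mul (s p q) (s p q) = M p q" for p q unfolding s_def sqrt_sq ..
  have "mat_eq n A (mat_mult add mul zero (n*n) B (mtrans B))"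
    unfolding mat_eq_def
  proof (intro allI impI)
    fix i j assume ij: "i < n" "j < n"
    have Aij: "A i j = mul (mul (D i i) (M i j)) (D j j)"
      using eq dmd[OF diag ij] ij unfolding mat_eq_def by auto
    have "isum add zero (n*n) (\<lambda>l. mul (B i l) (B j l)) = mul (mul (D i i) (M i j)) (D j j)"
    proof (rule isum_eq[where l="i*n+j"])
      have "i*n+j < (i+1)*n" using ij by simp
      also have "\<dots> \<le> n*n" using ij by (intro mult_right_mono) auto
      finally show "i*n+j < n*n" .
      have dv: "(i*n+j) div n = i" "(i*n+j) mod n = j" using ij by auto
      show "mul (B i (i*n+j)) (B j (i*n+j)) = mul (mul (D i i) (M i j)) (D j j)"
        unfolding B_def dv using ss[of i j] by (simp add: mul_assoc mul_comm mul_lc)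
    next
      fix l assume l: "l < n*n"
      define p where "p = l div n"
      define q where "q = l mod n"
      have pq: "p < n" "q < n" using l unfolding p_def q_def
        by (auto simp: less_mult_imp_div_less) (metis mod_less_divisor mult_eq_0_iff neq0_conv not_less_zero)
      show "le (mul (B i l) (B j l)) (mul (mul (D i i) (M i j)) (D j j))"
      proof (cases "(i = p \<or> i = q) \<and> (j = p \<or> j = q)")
        case False
        then have "B i l = zero \<or> B j l = zero" unfolding B_def p_def q_def by auto
        then show ?thesis by (metis mul_zero mul_comm zero_le)
      next
        case True
        then have t: "mul (B i l) (B j l) = mul (mul (D i i) (D j j)) (M p q)"
          unfolding B_def p_def[symmetric] q_def[symmetric] using ss[of p q]
          by (simp add: mul_assoc mul_comm mul_lc)
        show ?thesis
        proof (cases "i = j")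
          case True
          have "mul (mul (D i i) (M i j)) (D j j) = mul (D i i) (D j j)"
            using one ij True by (simp add: one_mul)
          then show ?thesis unfolding t using mul_le by simp
        next
          case False
          then have "M p q = M i j" using True sym pq ij unfolding symmetric_mat_def by auto
          then show ?thesis unfolding t by (simp add: mul_assoc mul_comm mul_lc le_refl)
        qed
      qed
    qed
    then show "A i j = mat_mult add mul zero (n*n) B (mtrans B) i j"
      unfolding Aij mat_mult_def mtrans_def by simp
  qed
  then show ?thesis unfolding psd_def by blast
qed

lemma psd_cp: "psd add mul zero n A \<longleftrightarrow> completely_positive add mul zero n A"
  unfolding psd_def completely_positive_def by (metis sqrt_sq)

end

theorem mainTheorem3:
  fixes add mul :: "'a \<Rightarrow> 'a \<Rightarrow> 'a" and zero one :: 'a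
    and n :: nat and A :: "nat \<Rightarrow> nat \<Rightarrow> 'a"
  assumes "normal_incline add mul zero one"
    and "symmetric_mat n A"
  shows "(psd add mul zero n A \<longleftrightarrow> completely_positive add mul zero n A)
    \<and> (completely_positive add mul zero n A \<longleftrightarrow>
         (\<forall>i<n. \<forall>j<n. inc_le add (mul (A i j) (A j i)) (mul (A i i) (A j j))))
    \<and> ((\<forall>i<n. \<forall>j<n. inc_le add (mul (A i j) (A j i)) (mul (A i i) (A j j))) \<longleftrightarrow>
         (\<exists>D M. diagonal_mat zero n D \<and> symmetric_mat n M \<and> (\<forall>i<n. M i i = one)
            \<and> mat_eq n A (mat_mult add mul zero n (mat_mult add mul zero n D M) D)))"
proof -
  interpret normal_incline add mul zero one by fact
  have 1: "psd add mul zero n A \<longleftrightarrow> completely_positive add mul zero n A" by (rule psd_cp)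
  have 34: "(\<forall>i<n. \<forall>j<n. inc_le add (mul (A i j) (A j i)) (mul (A i i) (A j j))) \<longleftrightarrow>
         (\<exists>D M. diagonal_mat zero n D \<and> symmetric_mat n M \<and> (\<forall>i<n. M i i = one)
            \<and> mat_eq n A (mat_mult add mul zero n (mat_mult add mul zero n D M) D))"
    using three_four[OF assms(2)] four_three by blast
  have 23: "completely_positive add mul zero n A \<longleftrightarrow>
         (\<forall>i<n. \<forall>j<n. inc_le add (mul (A i j) (A j i)) (mul (A i i) (A j j)))"
    using psd_3[OF _ assms(2)] 34 four_psd 1 by blast
  show ?thesis using 1 23 34 by blast
qed

end
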